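(* Let $r\ge2$ be an integer, $f\in C_p(\mathbb{R})$ and $c>0$. Assume that for every $n\in\mathbb{N}_0$, $$H_tf(x)=\min_{k\in\{0,1,\dots,r^n\}}q_f\Big(t,x;\frac{k}{r^n}\Big)\quad\text{for all }(t,x)\in\Big[\frac{1}{2cr^n},\infty\Big)\times[0,1].$$ Then there exists a dense subset of $[0,1]$ such that $f$ is not differentiable at any point of this subset.
   Context: $C_p(\mathbb{R})$ denotes the set of all continuous functions $f:\mathbb{R}\to\mathbb{R}$ periodic with period $1$ with $f(0)=0$; $\mathbb{N}_0=\mathbb{N}\cup\{0\}$. For such $f$, $q_f(t,x;z)=f(z)+\frac{1}{2t}(x-z)^2$ and $H_tf(x)=\inf_{z\in\mathbb{R}}q_f(t,x;z)$ for $t>0$, $x\in\mathbb{R}$. *)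

theory Defs
  imports "HOL-Analysis.Analysis"
begin

definition Cp :: "(real \<Rightarrow> real) set" where
  "Cp = {f. continuous_on UNIV f \<and> (\<forall>x. f (x + 1) = f x) \<and> f 0 = 0}"

definition qf :: "(real \<Rightarrow> real) \<Rightarrow> real \<Rightarrow> real \<Rightarrow> real \<Rightarrow> real" where
  "qf f t x z = f z + (x - z)^2 / (2 * t)"

definition Ht :: "real \<Rightarrow> (real \<Rightarrow> real) \<Rightarrow> real \<Rightarrow> real" where
  "Ht t f x = (INF z. qf f t x z)"

end

theory Submission
  imports Defs
begin

lemma per_nat: assumes "\<forall>x. f (x + 1) = (f x :: real)" shows "f (x + real n) = f x"
  using assms by (induction n arbitrary: x) (auto simp: add.assoc[symmetric])

lemma per_frac: fixes z :: real assumes "\<forall>x. f (x + 1) = (f x :: real)" shows "f z = f (z - of_int \<lfloor>z\<rfloor>)"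
proof (cases "\<lfloor>z\<rfloor> \<ge> 0")
  case True
  then obtain n::nat where n: "\<lfloor>z\<rfloor> = int n" by (metis nonneg_eq_int)
  have "f ((z - real n) + real n) = f (z - real n)" using per_nat[OF assms] by blast
  thus ?thesis using n by simp
next
  case False
  then obtain n::nat where n0: "- \<lfloor>z\<rfloor> = int n" by (metis nonneg_eq_int neg_0_le_iff_le linorder_linear)
  then have n: "\<lfloor>z\<rfloor> = - int n" by simp
  have "f (z + real n) = f z" using per_nat[OF assms] by blast
  thus ?thesis using n by simp
qed

lemma bound_f: fixes f :: "real \<Rightarrow> real" assumes "f \<in> Cp" shows "\<exists>M. \<forall>z. \<bar>f z\<bar> \<le> M"
proof -
  have c: "continuous_on {0..1} f" using assms unfolding Cp_def
    using continuous_on_subset by blast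
  have "compact (f ` {0..1})" by (rule compact_continuous_image[OF c compact_Icc])
  then obtain M where M: "\<forall>y\<in>f ` {0..1}. norm y \<le> M"
    using compact_imp_bounded bounded_iff by blast
  have p: "\<forall>x. f (x + 1) = f x" using assms unfolding Cp_def by blast
  show ?thesis
  proof (intro exI allI)
    fix z :: real
    have "z - of_int \<lfloor>z\<rfloor> \<in> {0..1}"
    proof -
      have "z < of_int \<lfloor>z\<rfloor> + 1" "of_int \<lfloor>z\<rfloor> \<le> z" by linarith+
      thus ?thesis by simp linarith
    qed
    then show "\<bar>f z\<bar> \<le> M" using M per_frac[OF p, of z] by auto
  qed
qed

lemma big_pow: assumes "(r::nat) \<ge> 2" shows "\<exists>n. real r ^ n > K"
proof -
  obtain n::nat where n: "real n > K" using reals_Archimedean2 by blast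
  have "n < 2 ^ n" by (rule less_exp)
  also have "(2::nat) ^ n \<le> r ^ n" using assms by (simp add: power_mono)
  finally have "real n < real r ^ n" by (metis of_nat_less_iff of_nat_power)
  thus ?thesis using n by (intro exI[of _ n]) linarith
qed


lemma nondiff_min:
  fixes f :: "real \<Rightarrow> real"
  assumes t: "t > 0" and ne: "x1 \<noteq> x2"
    and m1: "\<forall>z. qf f t x1 g \<le> qf f t x1 z" and m2: "\<forall>z. qf f t x2 g \<le> qf f t x2 z"
  shows "\<not> f differentiable (at g)"
proof
  assume "f differentiable (at g)"
  then obtain D where D: "(f has_real_derivative D) (at g)" using real_differentiable_def by blast
  have der: "((\<lambda>z. qf f t x z) has_real_derivative (D - (x - g) / t)) (at g)" for x
  proof -
    have "((\<lambda>z. f z + (x - z)^2 / (2 * t)) has_real_derivative (D - (x - g) / t)) (at g)"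
      using t by (auto intro!: derivative_eq_intros D simp: field_simps)
    then show ?thesis unfolding qf_def by simp
  qed
  have "D - (x1 - g) / t = 0" by (rule DERIV_local_min[OF der zero_less_one]) (use m1 in blast)
  moreover have "D - (x2 - g) / t = 0" by (rule DERIV_local_min[OF der zero_less_one]) (use m2 in blast)
  ultimately have "(x1 - g) / t = (x2 - g) / t" by simp
  then have "x1 - g = x2 - g" using t by (simp add: field_simps)
  then show False using ne by simp
qed

theorem theorem4p3:
  fixes r :: nat and f :: "real \<Rightarrow> real" and c :: real
  assumes "r \<ge> 2" and "f \<in> Cp" and "c > 0"
    and "\<And>n::nat. \<And>t x. t \<ge> 1 / (2 * c * real r ^ n) \<Longrightarrow> x \<in> {0..1} \<Longrightarrow>
           Ht t f x = (MIN k\<in>{0..r ^ n}. qf f t x (real k / real r ^ n))"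
  shows "\<exists>D \<subseteq> {0..1}. {0..1} \<subseteq> closure D \<and> (\<forall>x\<in>D. \<not> f differentiable (at x))"
proof -
  obtain M0 where M0: "\<forall>z. \<bar>f z\<bar> \<le> M0" using bound_f[OF assms(2)] by blast
  define M where "M = M0 + 1"
  have Mpos: "M > 0" using spec[OF M0, of 0] abs_ge_zero[of "f 0"] unfolding M_def by linarith
  have M: "\<bar>f z\<bar> \<le> M" for z using spec[OF M0, of z] unfolding M_def by linarith
  have Htle: "Ht t f x \<le> qf f t x z" if "t > 0" for t x z
  proof -
    have "bdd_below (range (qf f t x))"
    proof (rule bdd_belowI2)
      fix w
      have "-M \<le> f w" using M[of w] by linarith
      moreover have "0 \<le> (x - w)^2 / (2 * t)" using that by simp
      ultimately show "-M \<le> qf f t x w" unfolding qf_def by linarith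
    qed
    then show ?thesis unfolding Ht_def by (rule cINF_lower) simp
  qed
  have key: "\<exists>g\<in>{0..1}. dist g y < e \<and> \<not> f differentiable (at g)" if y: "y \<in> {0..1}" and e: "e > 0" for y e
  proof -
    define \<delta> where "\<delta> = min (e/4) (1/2)"
    have dpos: "\<delta> > 0" using e unfolding \<delta>_def by simp
    obtain a b where ab: "a < b" "0 \<le> a" "b \<le> 1" "\<forall>x\<in>{a..b}. \<bar>x - y\<bar> \<le> e/4"
    proof (cases "y \<le> 1/2")
      case True
      show ?thesis by (rule that[of y "y + \<delta>"]) (use True y dpos in \<open>auto simp: \<delta>_def\<close>)
    next
      case False
      show ?thesis by (rule that[of "y - \<delta>" y]) (use False y dpos in \<open>auto simp: \<delta>_def\<close>)
    qed
    obtain n where n: "real r ^ n > 8 * M / (c * e^2)" using big_pow[OF assms(1)] by blast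
    define t where "t = 1 / (2 * c * real r ^ n)"
    have rpos: "real r ^ n > 0" using assms(1) by simp
    have tpos: "t > 0" unfolding t_def using rpos assms(3) by simp
    have tsmall: "4 * t * M < (e/2)^2"
    proof -
      have "8 * M < real r ^ n * (c * e^2)" using n assms(3) e by (simp add: field_simps)
      then show ?thesis unfolding t_def using rpos assms(3) by (simp add: field_simps power2_eq_square)
    qed
    define K where "K = {0..r^n}"
    have ex: "\<exists>k. k \<in> K \<and> Ht t f x = qf f t x (real k / real r ^ n)" if "x \<in> {a..b}" for x
    proof -
      have "x \<in> {0..1}" using that ab by auto
      then have "Ht t f x = (MIN k\<in>K. qf f t x (real k / real r ^ n))"
        unfolding K_def by (intro assms(4)) (simp_all add: t_def)
      moreover have "(MIN k\<in>K. qf f t x (real k / real r ^ n)) \<in> (\<lambda>k. qf f t x (real k / real r ^ n)) ` K"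
        by (rule Min_in) (auto simp: K_def)
      ultimately show ?thesis by auto
    qed
    define kk where "kk x = (SOME k. k \<in> K \<and> Ht t f x = qf f t x (real k / real r ^ n))" for x
    have kk: "kk x \<in> K \<and> Ht t f x = qf f t x (real (kk x) / real r ^ n)" if "x \<in> {a..b}" for x
      unfolding kk_def using someI_ex[OF ex[OF that]] by blast
    have "\<not> inj_on kk {a..b}"
    proof
      assume "inj_on kk {a..b}"
      moreover have "finite (kk ` {a..b})"
        by (rule finite_subset[of _ K]) (use kk in \<open>auto simp: K_def\<close>)
      ultimately have "finite {a..b}" using finite_imageD by blast
      then show False using infinite_Icc[OF ab(1)] by simp
    qed
    then obtain x1 x2 where x12: "x1 \<in> {a..b}" "x2 \<in> {a..b}" "x1 \<noteq> x2" "kk x1 = kk x2"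
      unfolding inj_on_def by blast
    define g where "g = real (kk x1) / real r ^ n"
    have g01: "g \<in> {0..1}"
    proof -
      have "kk x1 \<le> r ^ n" using kk[OF x12(1)] by (simp add: K_def)
      then have "real (kk x1) \<le> real r ^ n" by (metis of_nat_le_iff of_nat_power)
      then show ?thesis unfolding g_def using rpos by simp
    qed
    have e1: "Ht t f x1 = qf f t x1 g" using kk[OF x12(1)] unfolding g_def by blast
    have e2: "Ht t f x2 = qf f t x2 g" using kk[OF x12(2)] x12(4) unfolding g_def by simp
    have min1: "\<forall>z. qf f t x1 g \<le> qf f t x1 z" using Htle[OF tpos, of x1] unfolding e1 by blast
    have min2: "\<forall>z. qf f t x2 g \<le> qf f t x2 z" using Htle[OF tpos, of x2] unfolding e2 by blast
    have close: "\<bar>x1 - g\<bar> < e/2"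
    proof -
      have "qf f t x1 g \<le> qf f t x1 x1" using min1 by blast
      then have "f g + (x1 - g)^2 / (2 * t) \<le> f x1" unfolding qf_def by simp
      then have "(x1 - g)^2 / (2 * t) \<le> 2 * M" using M[of g] M[of x1] by linarith
      then have "(x1 - g)^2 \<le> 4 * t * M" using tpos by (simp add: field_simps)
      then have "(x1 - g)^2 < (e/2)^2" using tsmall by linarith
      then have "\<bar>x1 - g\<bar>^2 < (e/2)^2" by simp
      then show ?thesis by (rule power_less_imp_less_base) (use e in simp)
    qed
    have "\<bar>x1 - y\<bar> \<le> e/4" using ab(4) x12(1) by blast
    then have "dist g y < e" using close e unfolding dist_real_def abs_less_iff abs_le_iff by linarith
    moreover have "\<not> f differentiable (at g)" by (rule nondiff_min[OF tpos x12(3) min1 min2])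
    ultimately show ?thesis using g01 by blast
  qed
  define D where "D = {g\<in>{0..1}. \<not> f differentiable (at g)}"
  have h2: "{0..1} \<subseteq> closure D"
  proof
    fix y :: real assume "y \<in> {0..1}"
    then show "y \<in> closure D" unfolding closure_approachable D_def using key by blast
  qed
  have h1: "D \<subseteq> {0..1}" unfolding D_def by blast
  have h3: "\<forall>x\<in>D. \<not> f differentiable (at x)" unfolding D_def by blast
  show ?thesis by (intro exI[of _ D] conjI h1 h2 h3)
qed

end
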